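(* Let $R$ be a finite Frobenius ring and $\mathcal{P}_{\mathrm{hom}}=P_1\mid\cdots\mid P_M$ its homogeneous weight partition. Then the left Krawtchouk coefficients $\sum_{a\in P_m}\chi(ab)$ ($b\in R$, $1\le m\le M$), and hence the left $\chi$-dual partition of $\mathcal{P}_{\mathrm{hom}}$, do not depend on the choice of the generating character $\chi$ of $R$. The same holds for the right Krawtchouk coefficients $\sum_{a\in P_m}\chi(ba)$ and the right $\chi$-dual partition.
   Context: A character of $R$ is a group homomorphism $(R,+)\to\mathbb{C}^*$; the character group $\widehat{R}$ is an $R$-$R$-bimodule via $(r\cdot\chi)(v)=\chi(vr)$ and $(\chi\cdot r)(v)=\chi(rv)$. $R$ is Frobenius iff there is a character $\chi$ with $\widehat{R}=R\cdot\chi$ (equivalently $\widehat{R}=\chi\cdot R$); such $\chi$ is called a generating character. $\mathcal{P}_{\mathrm{hom}}$ is the partition of $R$ into level sets of the normalized homogeneous weight $\omega$ (the unique map $R\to\mathbb{R}$ with $\omega(0)=0$, $\omega(x)=\omega(y)$ whenever $Rx=Ry$, and $\sum_{y\in Rx}\omega(y)=|Rx|$ for $x\ne0$). For a partition $\mathcal{P}=P_1\mid\cdots\mid P_M$ of $R$, the left $\chi$-dual partition is defined by: $b\sim b'$ iff $\sum_{a\in P_m}\chi(ab)=\sum_{a\in P_m}\chi(ab')$ for all $m$; the right $\chi$-dual partition by: $b\sim b'$ iff $\sum_{a\in P_m}\chi(ba)=\sum_{a\in P_m}\chi(b'a)$ for all $m$. *)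

theory Defs
  imports Complex_Main
begin

definition character :: "('a::ring_1 \<Rightarrow> complex) \<Rightarrow> bool" where
  "character \<chi> \<longleftrightarrow> (\<forall>x y. \<chi> (x + y) = \<chi> x * \<chi> y) \<and> (\<forall>x. \<chi> x \<noteq> 0)"

text \<open>Left action (r . chi)(v) = chi(v r); generating: every character is r . chi.\<close>
definition generating_character :: "('a::ring_1 \<Rightarrow> complex) \<Rightarrow> bool" where
  "generating_character \<chi> \<longleftrightarrow> character \<chi> \<and>
     (\<forall>\<psi>. character \<psi> \<longrightarrow> (\<exists>r. \<psi> = (\<lambda>v. \<chi> (v * r))))"

definition frobenius_ring :: "'a::{ring_1,finite} itself \<Rightarrow> bool" where
  "frobenius_ring _ \<longleftrightarrow> (\<exists>\<chi>::'a \<Rightarrow> complex. generating_character \<chi>)"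

definition left_principal :: "'a::ring_1 \<Rightarrow> 'a set" where
  "left_principal x = {r * x | r. True}"

definition is_hom_weight :: "('a::{ring_1,finite} \<Rightarrow> real) \<Rightarrow> bool" where
  "is_hom_weight \<omega> \<longleftrightarrow> \<omega> 0 = 0 \<and>
     (\<forall>x y. left_principal x = left_principal y \<longrightarrow> \<omega> x = \<omega> y) \<and>
     (\<forall>x. x \<noteq> 0 \<longrightarrow> (\<Sum>y\<in>left_principal x. \<omega> y) = real (card (left_principal x)))"

definition hom_weight :: "'a::{ring_1,finite} \<Rightarrow> real" where
  "hom_weight = (THE \<omega>. is_hom_weight \<omega>)"

definition level_partition :: "('a \<Rightarrow> real) \<Rightarrow> 'a set set" where
  "level_partition \<omega> = {{x. \<omega> x = c} | c. c \<in> range \<omega>}"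

abbreviation hom_partition :: "'a::{ring_1,finite} set set" where
  "hom_partition \<equiv> level_partition hom_weight"

definition left_dual_partition :: "('a::ring_1 \<Rightarrow> complex) \<Rightarrow> 'a set set \<Rightarrow> 'a set set" where
  "left_dual_partition \<chi> Ps =
     {{b'. \<forall>P\<in>Ps. (\<Sum>a\<in>P. \<chi> (a * b)) = (\<Sum>a\<in>P. \<chi> (a * b'))} | b. True}"

definition right_dual_partition :: "('a::ring_1 \<Rightarrow> complex) \<Rightarrow> 'a set set \<Rightarrow> 'a set set" where
  "right_dual_partition \<chi> Ps =
     {{b'. \<forall>P\<in>Ps. (\<Sum>a\<in>P. \<chi> (b * a)) = (\<Sum>a\<in>P. \<chi> (b' * a))} | b. True}"

end

theory Submission
  imports Defs
begin


definition subgrp :: "'a::ring_1 set \<Rightarrow> bool" where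
  "subgrp H \<longleftrightarrow> 0 \<in> H \<and> (\<forall>x\<in>H. \<forall>y\<in>H. x + y \<in> H) \<and> (\<forall>x\<in>H. -x \<in> H)"

definition char_on :: "'a::ring_1 set \<Rightarrow> ('a \<Rightarrow> complex) \<Rightarrow> bool" where
  "char_on H \<psi> \<longleftrightarrow> (\<forall>x\<in>H. \<forall>y\<in>H. \<psi> (x + y) = \<psi> x * \<psi> y) \<and> (\<forall>x\<in>H. \<psi> x \<noteq> 0)"

lemma subgrp_diff: "subgrp H \<Longrightarrow> x \<in> H \<Longrightarrow> y \<in> H \<Longrightarrow> x - y \<in> H"
  unfolding subgrp_def by (metis diff_conv_add_uminus)

lemma subgrp_nat_mult: "subgrp H \<Longrightarrow> x \<in> H \<Longrightarrow> of_nat n * x \<in> H"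
  by (induction n) (auto simp: subgrp_def distrib_right)

lemma subgrp_int_mult: assumes "subgrp H" "x \<in> H" shows "of_int k * x \<in> H"
proof (cases "k \<ge> 0")
  case True
  then obtain n where "k = int n" by (metis nonneg_int_cases)
  then show ?thesis using subgrp_nat_mult[OF assms] by simp
next
  case False
  then have "of_int k * x = - (of_nat (nat (-k)) * x)" by simp
  then show ?thesis using subgrp_nat_mult[OF assms, of "nat (-k)"] assms(1) by (simp add: subgrp_def)
qed

lemma char_zero: "subgrp H \<Longrightarrow> char_on H \<psi> \<Longrightarrow> \<psi> 0 = 1"
  unfolding subgrp_def char_on_def by (metis add_0 mult_cancel_right2)

lemma char_nat_mult: "subgrp H \<Longrightarrow> char_on H \<psi> \<Longrightarrow> x \<in> H \<Longrightarrow> \<psi> (of_nat n * x) = \<psi> x ^ n"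
proof (induction n)
  case 0 then show ?case using char_zero by simp
next
  case (Suc n)
  have "of_nat (Suc n) * x = of_nat n * x + x" by (simp add: distrib_right)
  moreover have "of_nat n * x \<in> H" using subgrp_nat_mult Suc.prems by blast
  ultimately show ?case using Suc by (simp add: char_on_def)
qed

lemma char_neg: "subgrp H \<Longrightarrow> char_on H \<psi> \<Longrightarrow> x \<in> H \<Longrightarrow> \<psi> (- x) = inverse (\<psi> x)"
proof -
  assume a: "subgrp H" "char_on H \<psi>" "x \<in> H"
  then have "-x \<in> H" by (simp add: subgrp_def)
  then have "\<psi> 0 = \<psi> (-x) * \<psi> x" using a unfolding char_on_def by (metis add.left_inverse)
  then have "\<psi> (-x) * \<psi> x = 1" using char_zero[OF a(1,2)] by simp
  then show ?thesis by (metis inverse_unique mult.commute)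
qed

lemma char_int_mult: assumes "subgrp H" "char_on H \<psi>" "x \<in> H"
  shows "\<psi> (of_int k * x) = \<psi> x powi k"
proof (cases "k \<ge> 0")
  case True
  then obtain n where "k = int n" by (metis nonneg_int_cases)
  then show ?thesis using char_nat_mult[OF assms] by simp
next
  case False
  then have e: "of_int k * x = - (of_nat (nat (-k)) * x)" by simp
  have "\<psi> (of_int k * x) = inverse (\<psi> x ^ nat (-k))"
    unfolding e using char_neg[OF assms(1,2) subgrp_nat_mult[OF assms(1,3)]] char_nat_mult[OF assms]
    by simp
  also have "\<dots> = \<psi> x powi k" using False
    by (metis add.inverse_inverse nat_0_le neg_0_le_iff_le nle_le power_int_minus power_int_of_nat)
  finally show ?thesis .
qed

lemma complex_root_exists: "n > 0 \<Longrightarrow> \<exists>w::complex. w ^ n = c"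
proof -
  assume n: "n > 0"
  define w where "w = rcis (root n (cmod c)) (Arg c / real n)"
  have "w ^ n = rcis (root n (cmod c) ^ n) (real n * (Arg c / real n))"
    unfolding w_def by (rule DeMoivre2)
  also have "\<dots> = rcis (cmod c) (Arg c)" using n by (simp add: real_root_pow_pos2)
  also have "\<dots> = c" by (rule rcis_cmod_Arg)
  finally show ?thesis by blast
qed

lemma exists_order:
  fixes g :: "'a::{ring_1,finite}"
  assumes H: "subgrp H"
  shows "\<exists>m>0. of_int m * g \<in> H \<and> (\<forall>k. of_int k * g \<in> H \<longrightarrow> m dvd k)"
proof -
  have "\<not> inj (\<lambda>n::nat. of_nat n * g)"
  proof
    assume "inj (\<lambda>n::nat. of_nat n * g)"
    then have "finite (UNIV :: nat set)"
      using finite_imageD[of "\<lambda>n::nat. of_nat n * g" UNIV] by simp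
    then show False by simp
  qed
  then obtain a b :: nat where ab: "a \<noteq> b" "of_nat a * g = of_nat b * g"
    unfolding inj_def by blast
  have "\<exists>n::nat. n > 0 \<and> of_nat n * g \<in> H"
  proof (cases "a < b")
    case True
    have "of_nat (b - a) * g = of_nat b * g - of_nat a * g"
      using True by (simp add: of_nat_diff left_diff_distrib)
    then show ?thesis using True ab H by (intro exI[of _ "b - a"]) (auto simp: subgrp_def)
  next
    case False
    then have "b < a" using ab by simp
    have "of_nat (a - b) * g = of_nat a * g - of_nat b * g"
      using \<open>b < a\<close> by (simp add: of_nat_diff left_diff_distrib)
    then show ?thesis using \<open>b < a\<close> ab H by (intro exI[of _ "a - b"]) (auto simp: subgrp_def)
  qed
  then obtain n0 where n0: "n0 > 0 \<and> of_nat n0 * g \<in> H" by blast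
  define n where "n = (LEAST n::nat. n > 0 \<and> of_nat n * g \<in> H)"
  have n: "n > 0 \<and> of_nat n * g \<in> H" unfolding n_def by (rule LeastI[of _ n0], rule n0)
  have nmin: "\<And>k::nat. k < n \<Longrightarrow> \<not> (k > 0 \<and> of_nat k * g \<in> H)"
    unfolding n_def using not_less_Least by blast
  have "\<forall>k. of_int k * g \<in> H \<longrightarrow> int n dvd k"
  proof (intro allI impI)
    fix k assume k: "of_int k * g \<in> H"
    define r where "r = k mod int n"
    have r0: "0 \<le> r" "r < int n" using n by (auto simp: r_def)
    have "of_int r * g = of_int k * g - of_int (k div int n) * (of_nat n * g)"
    proof -
      have "k = k div int n * int n + r" by (simp add: r_def)
      then have "of_int k * g = (of_int (k div int n) * of_int (int n) + of_int r) * g"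
        by (metis of_int_add of_int_mult)
      then show ?thesis by (simp add: distrib_right mult.assoc)
    qed
    then have "of_int r * g \<in> H"
      using k subgrp_int_mult[OF H] n subgrp_diff[OF H] by metis
    then have "of_nat (nat r) * g \<in> H" using r0 by simp
    then have "nat r = 0" using nmin[of "nat r"] r0 by linarith
    then show "int n dvd k" using r0 by (simp add: r_def dvd_eq_mod_eq_0)
  qed
  then show ?thesis using n by (intro exI[of _ "int n"]) auto
qed



lemma char_step:
  fixes H :: "'a::ring_1 set"
  assumes H: "subgrp H" and psi: "char_on H \<psi>"
    and m: "m > 0" "of_int m * g \<in> H" "\<And>k. of_int k * g \<in> H \<Longrightarrow> m dvd k"
    and w: "w ^ nat m = \<psi> (of_int m * g)"
  defines "H' \<equiv> {h + of_int k * g | h k. h \<in> H}"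
  shows "\<exists>\<psi>'. subgrp H' \<and> char_on H' \<psi>' \<and> (\<forall>x\<in>H. \<psi>' x = \<psi> x) \<and> \<psi>' g = w"
proof -
  have psinz: "\<And>x. x \<in> H \<Longrightarrow> \<psi> x \<noteq> 0" using psi by (simp add: char_on_def)
  have wnz: "w \<noteq> 0"
  proof
    assume "w = 0"
    then have "w ^ nat m = 0" using m(1) by simp
    then show False using w psinz[OF m(2)] by simp
  qed
  have wm: "w powi m = \<psi> (of_int m * g)"
    using w m(1) by (metis order_less_le power_int_of_nat zero_le_imp_eq_int nat_int)
  have wd: "\<psi> h * w powi k = \<psi> h' * w powi k'"
    if hh: "h \<in> H" "h' \<in> H" and eq: "h + of_int k * g = h' + of_int k' * g" for h h' k k'
  proof -
    have "of_int (k - k') * g = h' - h"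
      using eq by (simp add: left_diff_distrib algebra_simps)
    then have "of_int (k - k') * g \<in> H" using subgrp_diff[OF H hh(2,1)] by simp
    then obtain j where j: "k - k' = m * j" using m(3) by (meson dvdE)
    have "h' - h = of_int j * (of_int m * g)"
      using \<open>of_int (k - k') * g = h' - h\<close> j by (simp add: mult.assoc[symmetric] mult.commute)
    then have h': "h' = h + of_int j * (of_int m * g)" by (simp add: algebra_simps)
    have jm: "of_int j * (of_int m * g) \<in> H" using subgrp_int_mult[OF H m(2)] .
    have "\<psi> h' = \<psi> h * \<psi> (of_int m * g) powi j"
      using h' psi hh(1) jm char_int_mult[OF H psi m(2)] by (simp add: char_on_def)
    also have "\<dots> = \<psi> h * w powi (m * j)" using wm by (simp add: power_int_mult)
    finally have "\<psi> h' * w powi k' = \<psi> h * (w powi (m * j) * w powi k')" by simp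
    also have "w powi (m * j) * w powi k' = w powi k"
      using wnz j by (metis power_int_add diff_add_cancel)
    finally show ?thesis by simp
  qed
  define rep where "rep x = (SOME p. fst p \<in> H \<and> x = fst p + of_int (snd p) * g)" for x
  have rep: "fst (rep x) \<in> H \<and> x = fst (rep x) + of_int (snd (rep x)) * g" if "x \<in> H'" for x
  proof -
    from that obtain h k where "h \<in> H" "x = h + of_int k * g" unfolding H'_def by blast
    then have "\<exists>p. fst p \<in> H \<and> x = fst p + of_int (snd p) * g" by (intro exI[of _ "(h,k)"]) simp
    then show ?thesis unfolding rep_def by (rule someI_ex)
  qed
  define \<psi>' where "\<psi>' x = \<psi> (fst (rep x)) * w powi (snd (rep x))" for x
  have val: "\<psi>' (h + of_int k * g) = \<psi> h * w powi k" if "h \<in> H" for h k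
  proof -
    have "h + of_int k * g \<in> H'" using that unfolding H'_def by blast
    from rep[OF this] show ?thesis unfolding \<psi>'_def using wd that by metis
  qed
  have sub: "subgrp H'"
    unfolding subgrp_def
  proof (intro conjI ballI)
    show "0 \<in> H'" unfolding H'_def using H by (auto simp: subgrp_def intro!: exI[of _ 0])
  next
    fix x y assume "x \<in> H'" "y \<in> H'"
    then obtain h1 k1 h2 k2 where "h1 \<in> H" "h2 \<in> H" "x = h1 + of_int k1 * g" "y = h2 + of_int k2 * g"
      unfolding H'_def by blast
    then have "x + y = (h1 + h2) + of_int (k1 + k2) * g" "h1 + h2 \<in> H"
      using H by (auto simp: distrib_right subgrp_def algebra_simps)
    then show "x + y \<in> H'" unfolding H'_def by blast
  next
    fix x assume "x \<in> H'"
    then obtain h1 k1 where "h1 \<in> H" "x = h1 + of_int k1 * g" unfolding H'_def by blast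
    then have "-x = (-h1) + of_int (-k1) * g" "-h1 \<in> H"
      using H by (auto simp: subgrp_def)
    then show "-x \<in> H'" unfolding H'_def by blast
  qed
  have ch: "char_on H' \<psi>'"
    unfolding char_on_def
  proof (intro conjI ballI)
    fix x y assume "x \<in> H'" "y \<in> H'"
    then obtain h1 k1 h2 k2 where hs: "h1 \<in> H" "h2 \<in> H" "x = h1 + of_int k1 * g" "y = h2 + of_int k2 * g"
      unfolding H'_def by blast
    have xy: "x + y = (h1 + h2) + of_int (k1 + k2) * g" and hh: "h1 + h2 \<in> H"
      using H hs by (auto simp: distrib_right subgrp_def algebra_simps)
    have "\<psi>' (x + y) = \<psi> (h1 + h2) * w powi (k1 + k2)" unfolding xy by (rule val[OF hh])
    also have "\<dots> = (\<psi> h1 * w powi k1) * (\<psi> h2 * w powi k2)"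
      using psi hs wnz by (simp add: char_on_def power_int_add)
    finally show "\<psi>' (x + y) = \<psi>' x * \<psi>' y" using val hs by simp
  next
    fix x assume "x \<in> H'"
    then obtain h1 k1 where "h1 \<in> H" "x = h1 + of_int k1 * g" unfolding H'_def by blast
    then show "\<psi>' x \<noteq> 0" using val psinz wnz by simp
  qed
  have agree: "\<forall>x\<in>H. \<psi>' x = \<psi> x"
    using val[of _ 0] by simp
  have "\<psi>' g = w"
    using val[of 0 1] H char_zero[OF H psi] by (simp add: subgrp_def)
  then show ?thesis using sub ch agree by blast
qed

lemma char_extend:
  fixes H :: "'a::{ring_1,finite} set"
  assumes "subgrp H" "char_on H \<psi>"
  shows "\<exists>\<phi>. character \<phi> \<and> (\<forall>x\<in>H. \<phi> x = \<psi> x)"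
  using assms
proof (induction "card (- H)" arbitrary: H \<psi> rule: less_induct)
  case less
  show ?case
  proof (cases "H = UNIV")
    case True then show ?thesis using less.prems by (auto simp: character_def char_on_def)
  next
    case False
    then obtain g where g: "g \<notin> H" by auto
    obtain m where m: "m > 0" "of_int m * g \<in> H" "\<And>k. of_int k * g \<in> H \<Longrightarrow> m dvd k"
      using exists_order[OF less.prems(1), of g] by blast
    obtain w where w: "w ^ nat m = \<psi> (of_int m * g)"
      using complex_root_exists[of "nat m"] m(1) by auto
    define H' where "H' = {h + of_int k * g | h k. h \<in> H}"
    obtain \<psi>' where p: "subgrp H'" "char_on H' \<psi>'" "\<forall>x\<in>H. \<psi>' x = \<psi> x"
      using char_step[OF less.prems m w] unfolding H'_def by blast
    have "H \<subseteq> H'"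
    proof
      fix x assume "x \<in> H" then show "x \<in> H'" unfolding H'_def
        by (intro CollectI exI[of _ x] exI[of _ 0]) simp
    qed
    moreover have "g \<in> H'" unfolding H'_def using less.prems(1)
      by (intro CollectI exI[of _ 0] exI[of _ 1]) (simp add: subgrp_def)
    ultimately have "- H' \<subset> - H" using g by auto
    then have "card (- H') < card (- H)" by (simp add: psubset_card_mono)
    from less.hyps[OF this p(1,2)] obtain \<phi> where "character \<phi>" "\<forall>x\<in>H'. \<phi> x = \<psi>' x" by blast
    then show ?thesis using p(3) \<open>H \<subseteq> H'\<close> by (intro exI[of _ \<phi>]) auto
  qed
qed

lemma char_separate:
  fixes t :: "'a::{ring_1,finite}"
  assumes "t \<noteq> 0"
  shows "\<exists>\<phi>. character \<phi> \<and> \<phi> t \<noteq> 1"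
proof -
  have H: "subgrp {0::'a}" by (simp add: subgrp_def)
  have psi: "char_on {0::'a} (\<lambda>_. 1)" by (simp add: char_on_def)
  obtain m where m: "m > 0" "of_int m * t \<in> {0}" "\<And>k. of_int k * t \<in> {0} \<Longrightarrow> m dvd k"
    using exists_order[OF H, of t] by blast
  have "m \<noteq> 1" using m(2) assms by auto
  then have m1: "m > 1" using m(1) by simp
  define w where "w = cis (2 * pi / m)"
  have "w ^ nat m = cis (real (nat m) * (2 * pi / m))" unfolding w_def by (rule DeMoivre)
  also have "\<dots> = 1" using m1 by simp
  finally have w1: "w ^ nat m = (\<lambda>_. 1) (of_int m * t)" by simp
  have wne: "w \<noteq> 1"
  proof
    assume "w = 1"
    then have "cos (2 * pi / m) = 1" unfolding w_def by (metis cis.sel(1) one_complex.sel(1))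
    then obtain n :: int where n: "2 * pi / m = real_of_int n * 2 * pi" using cos_one_2pi_int by blast
    then have "2 * pi = real_of_int n * 2 * pi * m" using m1 by (simp add: divide_eq_eq)
    then have "real_of_int (n * m) = 1" by simp
    then have "n * m = 1" by linarith
    then show False using m1 zmult_eq_1_iff[of n m] by auto
  qed
  define H' where "H' = {h + of_int k * t | h k. h \<in> {0::'a}}"
  obtain \<psi>' where p: "subgrp H'" "char_on H' \<psi>'" "\<psi>' t = w"
    using char_step[OF H psi m w1] unfolding H'_def by blast
  obtain \<phi> where "character \<phi>" "\<forall>x\<in>H'. \<phi> x = \<psi>' x" using char_extend[OF p(1,2)] by blast
  moreover have "t \<in> H'" unfolding H'_def by (auto intro!: exI[of _ 1])
  ultimately show ?thesis using p(3) wne by auto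
qed



lemma character_diff: "character \<chi> \<Longrightarrow> \<chi> (a - b) = \<chi> a / \<chi> b"
proof -
  assume c: "character \<chi>"
  then have "\<chi> a = \<chi> (a - b) * \<chi> b" unfolding character_def by (metis diff_add_cancel)
  then show ?thesis using c by (simp add: character_def)
qed

lemma character_right: "character \<chi> \<Longrightarrow> character (\<lambda>v. \<chi> (v * q))"
  by (simp add: character_def distrib_right)

lemma character_left: "character \<chi> \<Longrightarrow> character (\<lambda>v. \<chi> (q * v))"
  by (simp add: character_def distrib_left)

lemma gen_inj_left:
  fixes \<chi> :: "'a::{ring_1,finite} \<Rightarrow> complex"
  assumes g: "generating_character \<chi>"
  shows "inj (\<lambda>q. \<lambda>v. \<chi> (q * v))"
proof (rule injI)
  fix q q' assume eq: "(\<lambda>v. \<chi> (q * v)) = (\<lambda>v. \<chi> (q' * v))"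
  have c: "character \<chi>" using g by (simp add: generating_character_def)
  show "q = q'"
  proof (rule ccontr)
    assume "q \<noteq> q'"
    then have "q - q' \<noteq> 0" by simp
    from char_separate[OF this] obtain \<phi> where \<phi>: "character \<phi>" "\<phi> (q - q') \<noteq> 1" by blast
    then obtain p where p: "\<phi> = (\<lambda>v. \<chi> (v * p))" using g by (auto simp: generating_character_def)
    have "\<chi> ((q - q') * p) = \<chi> (q * p) / \<chi> (q' * p)"
      using character_diff[OF c] by (simp add: left_diff_distrib)
    also have "\<dots> = 1" using eq c by (metis character_def divide_self)
    finally show False using \<phi> p by simp
  qed
qed

definition chars :: "('a::ring_1 \<Rightarrow> complex) set" where
  "chars = {\<psi>. character \<psi>}"

lemma chars_range:
  fixes \<chi> :: "'a::{ring_1,finite} \<Rightarrow> complex"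
  assumes g: "generating_character \<chi>"
  shows "chars = range (\<lambda>q. \<lambda>v. \<chi> (v * q))"
  using g character_right unfolding chars_def generating_character_def by blast

lemma card_chars:
  fixes \<chi> :: "'a::{ring_1,finite} \<Rightarrow> complex"
  assumes g: "generating_character \<chi>"
  shows "finite (chars :: ('a \<Rightarrow> complex) set)" "card (chars :: ('a \<Rightarrow> complex) set) = card (UNIV :: 'a set)"
proof -
  have c: "character \<chi>" using g by (simp add: generating_character_def)
  show f: "finite (chars :: ('a \<Rightarrow> complex) set)" unfolding chars_range[OF g] by (rule finite_imageI) simp
  have "card (chars :: ('a \<Rightarrow> complex) set) \<le> card (UNIV :: 'a set)"
    using chars_range[OF g] card_image_le[of UNIV "\<lambda>q. \<lambda>v. \<chi> (v * q)"] by simp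
  moreover have "range (\<lambda>q. \<lambda>v. \<chi> (q * v)) \<subseteq> chars"
    using character_left[OF c] by (auto simp: chars_def)
  then have "card (range (\<lambda>q. \<lambda>v. \<chi> (q * v))) \<le> card (chars :: ('a \<Rightarrow> complex) set)"
    using f by (rule card_mono[rotated])
  then have "card (UNIV :: 'a set) \<le> card (chars :: ('a \<Rightarrow> complex) set)"
    using card_image[OF gen_inj_left[OF g]] by simp
  ultimately show "card (chars :: ('a \<Rightarrow> complex) set) = card (UNIV :: 'a set)" by simp
qed

lemma gen_inj_right:
  fixes \<chi> :: "'a::{ring_1,finite} \<Rightarrow> complex"
  assumes g: "generating_character \<chi>"
  shows "inj (\<lambda>q. \<lambda>v. \<chi> (v * q))"
proof -
  have "card (range (\<lambda>q. \<lambda>v. \<chi> (v * q))) = card (UNIV :: 'a set)"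
    using card_chars[OF g] chars_range[OF g] by simp
  then show ?thesis by (simp add: eq_card_imp_inj_on)
qed

lemma gen_left:
  fixes \<chi> :: "'a::{ring_1,finite} \<Rightarrow> complex"
  assumes g: "generating_character \<chi>" and c: "character \<psi>"
  shows "\<exists>q. \<psi> = (\<lambda>v. \<chi> (q * v))"
proof -
  have c0: "character \<chi>" using g by (simp add: generating_character_def)
  have sub: "range (\<lambda>q. \<lambda>v. \<chi> (q * v)) \<subseteq> chars"
    using character_left[OF c0] by (auto simp: chars_def)
  have "card (range (\<lambda>q. \<lambda>v. \<chi> (q * v))) = card (chars :: ('a \<Rightarrow> complex) set)"
    using card_chars[OF g] card_image[OF gen_inj_left[OF g]] by simp
  then have "range (\<lambda>q. \<lambda>v. \<chi> (q * v)) = chars"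
    using card_subset_eq[OF card_chars(1)[OF g] sub] by simp
  then show ?thesis using c by (auto simp: chars_def)
qed

lemma right_unit:
  fixes \<chi> \<chi>' :: "'a::{ring_1,finite} \<Rightarrow> complex"
  assumes g: "generating_character \<chi>" and g': "generating_character \<chi>'"
  shows "\<exists>r s. r * s = 1 \<and> s * r = 1 \<and> \<chi>' = (\<lambda>v. \<chi> (v * r))"
proof -
  have c: "character \<chi>" "character \<chi>'" using g g' by (auto simp: generating_character_def)
  obtain r where r: "\<chi>' = (\<lambda>v. \<chi> (v * r))" using g c(2) by (auto simp: generating_character_def)
  obtain s where s: "\<chi> = (\<lambda>v. \<chi>' (v * s))" using g' c(1) by (auto simp: generating_character_def)
  have "(\<lambda>v. \<chi> (v * (s * r))) = (\<lambda>v. \<chi> (v * 1))"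
    using s r by (metis mult.assoc mult_1_right)
  then have sr: "s * r = 1" using gen_inj_right[OF g] by (meson injD)
  have "(\<lambda>v. \<chi>' (v * (r * s))) = (\<lambda>v. \<chi>' (v * 1))"
    using s r by (metis mult.assoc mult_1_right)
  then have rs: "r * s = 1" using gen_inj_right[OF g'] by (meson injD)
  show ?thesis using r rs sr by blast
qed

lemma left_unit:
  fixes \<chi> \<chi>' :: "'a::{ring_1,finite} \<Rightarrow> complex"
  assumes g: "generating_character \<chi>" and g': "generating_character \<chi>'"
  shows "\<exists>r s. r * s = 1 \<and> s * r = 1 \<and> \<chi>' = (\<lambda>v. \<chi> (r * v))"
proof -
  have c: "character \<chi>" "character \<chi>'" using g g' by (auto simp: generating_character_def)
  obtain r where r: "\<chi>' = (\<lambda>v. \<chi> (r * v))" using gen_left[OF g c(2)] by blast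
  obtain s where s: "\<chi> = (\<lambda>v. \<chi>' (s * v))" using gen_left[OF g' c(1)] by blast
  have "(\<lambda>v. \<chi> ((r * s) * v)) = (\<lambda>v. \<chi> (1 * v))"
    using s r by (metis mult.assoc mult_1_left)
  then have rs: "r * s = 1" using gen_inj_left[OF g] by (meson injD)
  have "(\<lambda>v. \<chi>' ((s * r) * v)) = (\<lambda>v. \<chi>' (1 * v))"
    using s r by (metis mult.assoc mult_1_left)
  then have sr: "s * r = 1" using gen_inj_left[OF g'] by (meson injD)
  show ?thesis using r rs sr by blast
qed



lemma lp_self: "x \<in> left_principal x"
  unfolding left_principal_def by (auto intro: exI[of _ 1])

lemma lp_sub: "y \<in> left_principal x \<Longrightarrow> left_principal y \<subseteq> left_principal x"
  unfolding left_principal_def by (auto simp: mult.assoc[symmetric])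

lemma lp_zero_iff: "left_principal x = {0} \<longleftrightarrow> x = 0"
proof
  assume "left_principal x = {0}" then show "x = 0" using lp_self[of x] by auto
next
  assume "x = 0" then show "left_principal x = {0}" unfolding left_principal_def by auto
qed

lemma lp_card_pos: "card (left_principal (x::'a::{ring_1,finite})) > 0"
proof -
  have "x \<in> {y\<in>left_principal x. left_principal y = left_principal x}" using lp_self[of x] by blast
  then show ?thesis by (subst card_gt_0_iff) auto
qed

lemma lp_card_less:
  fixes x y :: "'a::{ring_1,finite}"
  assumes "y \<in> left_principal x" "left_principal y \<noteq> left_principal x"
  shows "card (left_principal y) < card (left_principal x)"
proof -
  have "left_principal y \<subset> left_principal x" using assms lp_sub by blast
  then show ?thesis by (simp add: psubset_card_mono)
qed

lemma sum_split:
  fixes \<omega> :: "'a::{ring_1,finite} \<Rightarrow> real"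
  assumes "\<And>y. left_principal y = left_principal x \<Longrightarrow> \<omega> y = \<omega> x"
  shows "(\<Sum>y\<in>left_principal x. \<omega> y) =
    real (card {y\<in>left_principal x. left_principal y = left_principal x}) * \<omega> x
    + (\<Sum>y\<in>{y\<in>left_principal x. left_principal y \<noteq> left_principal x}. \<omega> y)"
proof -
  have "(\<Sum>y\<in>left_principal x. \<omega> y) =
     (\<Sum>y\<in>{y\<in>left_principal x. left_principal y = left_principal x}. \<omega> y)
    + (\<Sum>y\<in>{y\<in>left_principal x. left_principal y \<noteq> left_principal x}. \<omega> y)"
  proof -
    have "(\<Sum>y\<in>{y\<in>left_principal x. left_principal y = left_principal x}
       \<union> {y\<in>left_principal x. left_principal y \<noteq> left_principal x}. \<omega> y) =
      (\<Sum>y\<in>{y\<in>left_principal x. left_principal y = left_principal x}. \<omega> y)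
    + (\<Sum>y\<in>{y\<in>left_principal x. left_principal y \<noteq> left_principal x}. \<omega> y)"
      by (rule sum.union_disjoint) auto
    moreover have "{y\<in>left_principal x. left_principal y = left_principal x}
       \<union> {y\<in>left_principal x. left_principal y \<noteq> left_principal x} = left_principal x" by blast
    ultimately show ?thesis by simp
  qed
  also have "(\<Sum>y\<in>{y\<in>left_principal x. left_principal y = left_principal x}. \<omega> y)
     = real (card {y\<in>left_principal x. left_principal y = left_principal x}) * \<omega> x"
  proof -
    have "(\<Sum>y\<in>{y\<in>left_principal x. left_principal y = left_principal x}. \<omega> y)
      = (\<Sum>y\<in>{y\<in>left_principal x. left_principal y = left_principal x}. \<omega> x)"
      by (rule sum.cong) (auto intro: assms)
    then show ?thesis by simp
  qed
  finally show ?thesis .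
qed

lemma G_card_pos: "card {y\<in>left_principal (x::'a::{ring_1,finite}). left_principal y = left_principal x} > 0"
proof -
  have "x \<in> {y\<in>left_principal x. left_principal y = left_principal x}" using lp_self[of x] by blast
  then show ?thesis by (subst card_gt_0_iff) auto
qed

lemma ihw_0: assumes "is_hom_weight \<omega>" shows "\<omega> 0 = 0"
  by (rule conjunct1[OF assms[unfolded is_hom_weight_def]])

lemma ihw_cong: assumes "is_hom_weight \<omega>" "left_principal x = left_principal y" shows "\<omega> x = \<omega> y"
  by (rule conjunct1[OF conjunct2[OF assms(1)[unfolded is_hom_weight_def]], rule_format, OF assms(2)])

lemma ihw_sum: assumes "is_hom_weight \<omega>" "x \<noteq> 0"
  shows "(\<Sum>y\<in>left_principal x. \<omega> y) = real (card (left_principal x))"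
  by (rule conjunct2[OF conjunct2[OF assms(1)[unfolded is_hom_weight_def]], rule_format, OF assms(2)])

lemma hom_weight_unique:
  fixes \<omega>1 \<omega>2 :: "'a::{ring_1,finite} \<Rightarrow> real"
  assumes h1: "is_hom_weight \<omega>1" and h2: "is_hom_weight \<omega>2"
  shows "\<omega>1 = \<omega>2"
proof
  fix x
  show "\<omega>1 x = \<omega>2 x"
  proof (induction "card (left_principal x)" arbitrary: x rule: less_induct)
    case less
    show ?case
    proof (cases "x = 0")
      case True
      have "\<omega>1 0 = 0" "\<omega>2 0 = 0" using ihw_0 h1 h2 by auto
      then show ?thesis using True by simp
    next
      case False
      define G where "G = {y\<in>left_principal x. left_principal y = left_principal x}"
      define Rest where "Rest = {y\<in>left_principal x. left_principal y \<noteq> left_principal x}"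
      have c1: "\<And>y. left_principal y = left_principal x \<Longrightarrow> \<omega>1 y = \<omega>1 x"
        using ihw_cong[OF h1] by blast
      have c2: "\<And>y. left_principal y = left_principal x \<Longrightarrow> \<omega>2 y = \<omega>2 x"
        using ihw_cong[OF h2] by blast
      have rest: "(\<Sum>y\<in>Rest. \<omega>1 y) = (\<Sum>y\<in>Rest. \<omega>2 y)"
      proof (rule sum.cong)
        fix y assume "y \<in> Rest"
        then have "card (left_principal y) < card (left_principal x)"
          using lp_card_less unfolding Rest_def by blast
        then show "\<omega>1 y = \<omega>2 y" by (rule less.hyps)
      qed simp
      have s1: "(\<Sum>y\<in>left_principal x. \<omega>1 y) = real (card (left_principal x))"
        using ihw_sum[OF h1 False] .
      have s2: "(\<Sum>y\<in>left_principal x. \<omega>2 y) = real (card (left_principal x))"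
        using ihw_sum[OF h2 False] .
      have "real (card G) * \<omega>1 x + (\<Sum>y\<in>Rest. \<omega>1 y) = real (card G) * \<omega>2 x + (\<Sum>y\<in>Rest. \<omega>2 y)"
        using sum_split[where \<omega>=\<omega>1 and x=x, OF c1] sum_split[where \<omega>=\<omega>2 and x=x, OF c2] s1 s2
        unfolding G_def[symmetric] Rest_def[symmetric] by linarith
      then have "real (card G) * \<omega>1 x = real (card G) * \<omega>2 x" using rest by simp
      moreover have "card G > 0" unfolding G_def by (rule G_card_pos)
      ultimately show ?thesis by (metis mult_cancel_left of_nat_eq_0_iff less_irrefl)
    qed
  qed
qed

definition good :: "nat \<Rightarrow> ('a::{ring_1,finite} \<Rightarrow> real) \<Rightarrow> bool" where
  "good n \<omega> \<longleftrightarrow> \<omega> 0 = 0 \<and> (\<forall>x y. left_principal x = left_principal y \<longrightarrow> \<omega> x = \<omega> y) \<and>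
     (\<forall>x. x \<noteq> 0 \<longrightarrow> card (left_principal x) \<le> n \<longrightarrow>
        (\<Sum>y\<in>left_principal x. \<omega> y) = real (card (left_principal x)))"

lemma good_0: assumes "good n \<omega>" shows "\<omega> 0 = 0"
  by (rule conjunct1[OF assms[unfolded good_def]])

lemma good_cong: assumes "good n \<omega>" "left_principal x = left_principal y" shows "\<omega> x = \<omega> y"
  by (rule conjunct1[OF conjunct2[OF assms(1)[unfolded good_def]], rule_format, OF assms(2)])

lemma good_sum: assumes "good n \<omega>" "x \<noteq> 0" "card (left_principal x) \<le> n"
  shows "(\<Sum>y\<in>left_principal x. \<omega> y) = real (card (left_principal x))"
  by (rule conjunct2[OF conjunct2[OF assms(1)[unfolded good_def]], rule_format, OF assms(2,3)])

lemma good_exists: "\<exists>\<omega>::'a::{ring_1,finite} \<Rightarrow> real. good n \<omega>"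
proof (induction n)
  case 0
  show ?case using lp_card_pos by (intro exI[of _ "\<lambda>_. 0"]) (auto simp: good_def)
next
  case (Suc n)
  then obtain \<omega> :: "'a \<Rightarrow> real" where g: "good n \<omega>" by blast
  define G where "G x = {y\<in>left_principal x. left_principal y = left_principal x}" for x :: 'a
  define Rest where "Rest x = {y\<in>left_principal x. left_principal y \<noteq> left_principal x}" for x :: 'a
  define \<omega>' where "\<omega>' x = (if x \<noteq> 0 \<and> card (left_principal x) = Suc n
      then (real (card (left_principal x)) - (\<Sum>y\<in>Rest x. \<omega> y)) / real (card (G x)) else \<omega> x)" for x
  have "\<omega> 0 = 0" using good_0[OF g] .
  then have z: "\<omega>' 0 = 0" by (simp add: \<omega>'_def)
  have cong: "\<omega>' x = \<omega>' y" if "left_principal x = left_principal y" for x y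
  proof -
    have "x \<noteq> 0 \<longleftrightarrow> y \<noteq> 0" using that lp_zero_iff by metis
    moreover have "G x = G y" "Rest x = Rest y" using that by (auto simp: G_def Rest_def)
    moreover have "\<omega> x = \<omega> y" using good_cong[OF g that] .
    ultimately show ?thesis unfolding \<omega>'_def using that by simp
  qed
  have sm: "(\<Sum>y\<in>left_principal x. \<omega>' y) = real (card (left_principal x))"
    if x: "x \<noteq> 0" "card (left_principal x) \<le> Suc n" for x
  proof (cases "card (left_principal x) \<le> n")
    case True
    have "(\<Sum>y\<in>left_principal x. \<omega>' y) = (\<Sum>y\<in>left_principal x. \<omega> y)"
    proof (rule sum.cong)
      fix y assume "y \<in> left_principal x"
      then have "card (left_principal y) \<le> card (left_principal x)"
        using lp_sub by (intro card_mono) auto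
      then show "\<omega>' y = \<omega> y" using True by (simp add: \<omega>'_def)
    qed simp
    moreover have "(\<Sum>y\<in>left_principal x. \<omega> y) = real (card (left_principal x))"
      using good_sum[OF g x(1) True] .
    ultimately show ?thesis by simp
  next
    case False
    then have e: "card (left_principal x) = Suc n" using x by simp
    have c1: "\<And>y. left_principal y = left_principal x \<Longrightarrow> \<omega>' y = \<omega>' x" using cong by metis
    have rest: "(\<Sum>y\<in>Rest x. \<omega>' y) = (\<Sum>y\<in>Rest x. \<omega> y)"
    proof (rule sum.cong)
      fix y assume "y \<in> Rest x"
      then have "card (left_principal y) < card (left_principal x)"
        using lp_card_less unfolding Rest_def by blast
      then have "card (left_principal y) < Suc n" using e by simp
      then show "\<omega>' y = \<omega> y" by (simp add: \<omega>'_def)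
    qed simp
    have "(\<Sum>y\<in>left_principal x. \<omega>' y) = real (card (G x)) * \<omega>' x + (\<Sum>y\<in>Rest x. \<omega> y)"
      using sum_split[where \<omega>=\<omega>' and x=x, OF c1] rest unfolding G_def[symmetric] Rest_def[symmetric] by simp
    also have "\<omega>' x = (real (card (left_principal x)) - (\<Sum>y\<in>Rest x. \<omega> y)) / real (card (G x))"
      using x e by (simp add: \<omega>'_def)
    finally have fin: "(\<Sum>y\<in>left_principal x. \<omega>' y) = real (card (G x)) *
       ((real (card (left_principal x)) - (\<Sum>y\<in>Rest x. \<omega> y)) / real (card (G x))) + (\<Sum>y\<in>Rest x. \<omega> y)" .
    have "card (G x) > 0" unfolding G_def by (rule G_card_pos)
    then have nz: "real (card (G x)) \<noteq> 0" by linarith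
    show ?thesis unfolding fin using nz by simp
  qed
  have "good (Suc n) \<omega>'" unfolding good_def
  proof (intro conjI allI impI)
    show "\<omega>' 0 = 0" by (rule z)
  next
    fix x y :: 'a assume "left_principal x = left_principal y"
    then show "\<omega>' x = \<omega>' y" by (rule cong)
  next
    fix x :: 'a assume "x \<noteq> 0" "card (left_principal x) \<le> Suc n"
    then show "(\<Sum>y\<in>left_principal x. \<omega>' y) = real (card (left_principal x))" by (rule sm)
  qed
  then show ?case by blast
qed

lemma hom_weight_is: "is_hom_weight (hom_weight :: 'a::{ring_1,finite} \<Rightarrow> real)"
proof -
  obtain \<omega> :: "'a \<Rightarrow> real" where g: "good (card (UNIV :: 'a set)) \<omega>" using good_exists by blast
  have "is_hom_weight \<omega>" unfolding is_hom_weight_def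
  proof (intro conjI allI impI)
    show "\<omega> 0 = 0" using good_0[OF g] .
  next
    fix x y :: 'a assume "left_principal x = left_principal y"
    then show "\<omega> x = \<omega> y" using good_cong[OF g] by blast
  next
    fix x :: 'a assume x: "x \<noteq> 0"
    have "card (left_principal x) \<le> card (UNIV :: 'a set)" by (rule card_mono) auto
    then show "(\<Sum>y\<in>left_principal x. \<omega> y) = real (card (left_principal x))"
      using good_sum[OF g x] by blast
  qed
  then have "\<exists>!\<omega>. is_hom_weight (\<omega> :: 'a \<Rightarrow> real)" using hom_weight_unique by blast
  then show ?thesis unfolding hom_weight_def by (rule theI')
qed



lemma lp_left_unit: "v * u = 1 \<Longrightarrow> left_principal (u * x) = left_principal x"
  unfolding left_principal_def
proof (intro equalityI subsetI)
  fix z assume "v * u = 1" "z \<in> {r * (u * x) |r. True}"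
  then show "z \<in> {r * x |r. True}" by (auto simp: mult.assoc[symmetric])
next
  fix z assume vu: "v * u = 1" and "z \<in> {r * x |r. True}"
  then obtain r where "z = r * x" by blast
  then have "z = (r * v) * (u * x)" using vu by (simp add: mult.assoc[symmetric]) (simp add: mult.assoc)
  then show "z \<in> {r * (u * x) |r. True}" by blast
qed

lemma hw_left: "v * u = 1 \<Longrightarrow> hom_weight (u * x) = hom_weight x"
  using ihw_cong[OF hom_weight_is lp_left_unit] by blast

lemma lp_right: "left_principal (x * u) = (\<lambda>y. y * u) ` left_principal x"
  unfolding left_principal_def
proof (intro equalityI subsetI)
  fix z assume "z \<in> {r * (x * u) |r. True}"
  then obtain r where "z = (r * x) * u" by (auto simp: mult.assoc)
  then show "z \<in> (\<lambda>y. y * u) ` {r * x |r. True}" by blast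
qed (auto simp: mult.assoc)

lemma hw_right:
  fixes u v :: "'a::{ring_1,finite}"
  assumes uv: "u * v = 1" and vu: "v * u = 1"
  shows "hom_weight (x * u) = hom_weight x"
proof -
  have inj: "inj_on (\<lambda>y. y * u) A" for A :: "'a set"
  proof (rule inj_onI)
    fix y y' assume "y * u = y' * u"
    then have "y * u * v = y' * u * v" by simp
    then show "y = y'" using uv by (simp add: mult.assoc)
  qed
  have "is_hom_weight (\<lambda>x. hom_weight (x * u) :: real)" unfolding is_hom_weight_def
  proof (intro conjI allI impI)
    show "hom_weight (0 * u) = (0::real)" using ihw_0[OF hom_weight_is] by simp
  next
    fix x y :: 'a assume "left_principal x = left_principal y"
    then have "left_principal (x * u) = left_principal (y * u)" by (simp add: lp_right)
    then show "hom_weight (x * u) = (hom_weight (y * u) :: real)" by (rule ihw_cong[OF hom_weight_is])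
  next
    fix x :: 'a assume x: "x \<noteq> 0"
    have "x * u \<noteq> 0"
    proof
      assume "x * u = 0"
      then have "x * u * v = 0" by simp
      then show False using x uv by (simp add: mult.assoc)
    qed
    have "(\<Sum>y\<in>left_principal x. hom_weight (y * u) :: real) = (\<Sum>z\<in>left_principal (x * u). hom_weight z)"
      unfolding lp_right by (simp add: sum.reindex[OF inj])
    also have "\<dots> = real (card (left_principal (x * u)))" by (rule ihw_sum[OF hom_weight_is \<open>x * u \<noteq> 0\<close>])
    also have "card (left_principal (x * u)) = card (left_principal x)"
      unfolding lp_right by (rule card_image[OF inj])
    finally show "(\<Sum>y\<in>left_principal x. hom_weight (y * u) :: real) = real (card (left_principal x))" .
  qed
  then have "(\<lambda>x. hom_weight (x * u) :: real) = hom_weight" using hom_weight_unique hom_weight_is by blast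
  then show ?thesis by (rule fun_cong)
qed

lemma partition_level: "P \<in> level_partition \<omega> \<Longrightarrow> \<exists>c. P = {x. \<omega> x = c}"
  unfolding level_partition_def by blast

lemma bij_left:
  fixes u v :: "'a::{ring_1,finite}"
  assumes P: "P \<in> (hom_partition :: 'a set set)" and uv: "u * v = 1" and vu: "v * u = 1"
  shows "bij_betw (\<lambda>a. u * a) P P"
proof -
  obtain c where c: "P = {x. hom_weight x = c}" using partition_level[OF P] by blast
  show ?thesis
  proof (rule bij_betw_byWitness[where f'="\<lambda>a. v * a"])
    show "\<forall>a\<in>P. v * (u * a) = a" using vu by (simp add: mult.assoc[symmetric])
    show "\<forall>a\<in>P. u * (v * a) = a" using uv by (simp add: mult.assoc[symmetric])
    show "(\<lambda>a. u * a) ` P \<subseteq> P" using hw_left[OF vu] c by auto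
    show "(\<lambda>a. v * a) ` P \<subseteq> P" using hw_left[OF uv] c by auto
  qed
qed

lemma bij_right:
  fixes u v :: "'a::{ring_1,finite}"
  assumes P: "P \<in> (hom_partition :: 'a set set)" and uv: "u * v = 1" and vu: "v * u = 1"
  shows "bij_betw (\<lambda>a. a * u) P P"
proof -
  obtain c where c: "P = {x. hom_weight x = c}" using partition_level[OF P] by blast
  show ?thesis
  proof (rule bij_betw_byWitness[where f'="\<lambda>a. a * v"])
    show "\<forall>a\<in>P. a * u * v = a" using uv by (simp add: mult.assoc)
    show "\<forall>a\<in>P. a * v * u = a" using vu by (simp add: mult.assoc)
    show "(\<lambda>a. a * u) ` P \<subseteq> P" using hw_right[OF uv vu] c by auto
    show "(\<lambda>a. a * v) ` P \<subseteq> P" using hw_right[OF vu uv] c by auto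
  qed
qed

theorem corollary5p3:
  assumes "frobenius_ring TYPE('a::{ring_1,finite})"
    and "generating_character (\<chi>::'a \<Rightarrow> complex)"
    and "generating_character (\<chi>'::'a \<Rightarrow> complex)"
  shows "(\<forall>P\<in>(hom_partition::'a set set). \<forall>b.
            (\<Sum>a\<in>P. \<chi> (a * b)) = (\<Sum>a\<in>P. \<chi>' (a * b))) \<and>
         left_dual_partition \<chi> (hom_partition::'a set set) = left_dual_partition \<chi>' hom_partition \<and>
         (\<forall>P\<in>(hom_partition::'a set set). \<forall>b.
            (\<Sum>a\<in>P. \<chi> (b * a)) = (\<Sum>a\<in>P. \<chi>' (b * a))) \<and>
         right_dual_partition \<chi> (hom_partition::'a set set) = right_dual_partition \<chi>' hom_partition"
proof -
  obtain u s where us: "u * s = 1" "s * u = 1" and l: "\<chi>' = (\<lambda>v. \<chi> (u * v))"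
    using left_unit[OF assms(2,3)] by blast
  obtain r t where rt: "r * t = 1" "t * r = 1" and r: "\<chi>' = (\<lambda>v. \<chi> (v * r))"
    using right_unit[OF assms(2,3)] by blast
  have K1: "\<forall>P\<in>(hom_partition::'a set set). \<forall>b.
            (\<Sum>a\<in>P. \<chi> (a * b)) = (\<Sum>a\<in>P. \<chi>' (a * b))"
  proof (intro ballI allI)
    fix P :: "'a set" and b assume P: "P \<in> hom_partition"
    have "(\<Sum>a\<in>P. \<chi>' (a * b)) = (\<Sum>a\<in>P. (\<lambda>a. \<chi> (a * b)) ((\<lambda>a. u * a) a))"
      unfolding l by (simp add: mult.assoc)
    also have "\<dots> = (\<Sum>a\<in>P. \<chi> (a * b))" by (rule sum.reindex_bij_betw[OF bij_left[OF P us]])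
    finally show "(\<Sum>a\<in>P. \<chi> (a * b)) = (\<Sum>a\<in>P. \<chi>' (a * b))" by simp
  qed
  have K2: "\<forall>P\<in>(hom_partition::'a set set). \<forall>b.
            (\<Sum>a\<in>P. \<chi> (b * a)) = (\<Sum>a\<in>P. \<chi>' (b * a))"
  proof (intro ballI allI)
    fix P :: "'a set" and b assume P: "P \<in> hom_partition"
    have "(\<Sum>a\<in>P. \<chi>' (b * a)) = (\<Sum>a\<in>P. (\<lambda>a. \<chi> (b * a)) ((\<lambda>a. a * r) a))"
      unfolding r by (simp add: mult.assoc)
    also have "\<dots> = (\<Sum>a\<in>P. \<chi> (b * a))" by (rule sum.reindex_bij_betw[OF bij_right[OF P rt]])
    finally show "(\<Sum>a\<in>P. \<chi> (b * a)) = (\<Sum>a\<in>P. \<chi>' (b * a))" by simp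
  qed
  have L: "left_dual_partition \<chi> (hom_partition::'a set set) = left_dual_partition \<chi>' hom_partition"
    unfolding left_dual_partition_def using K1 by simp
  have R: "right_dual_partition \<chi> (hom_partition::'a set set) = right_dual_partition \<chi>' hom_partition"
    unfolding right_dual_partition_def using K2 by simp
  show ?thesis using K1 K2 L R by blast
qed

end
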